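(* Let $d\ge 2$ and $N\in\mathbb{N}$, and let $$P(\mathbf{x}):=\left(\frac{4^{N-1}}{N\binom{2N-2}{N-1}}\right)^d\prod_{j=1}^d\sin^{2N-2}(\pi x_j/N),\qquad \mathbf{x}\in\mathbb{R}^d.$$ Then $P\chi_{[0,N]^d}$ satisfies the partition of unity condition $$\sum_{\mathbf{n}\in\mathbb{Z}^d} P(\mathbf{x}+\mathbf{n})\chi_{[0,N]^d}(\mathbf{x}+\mathbf{n})=1\quad\text{for all }\mathbf{x}\in\mathbb{R}^d,$$ and $P\chi_{[0,N]^d}\in C^{2N-3}(\mathbb{R}^d)$.
   Context: $\chi_{[0,N]^d}$ is the indicator function of $[0,N]^d$. $C^{m}(\mathbb{R}^d)$ denotes functions with continuous partial derivatives of all total orders at most $m$. *)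

theory Defs
  imports "HOL-Analysis.Analysis"
begin

definition Ptrig :: "nat \<Rightarrow> real^'n \<Rightarrow> real" where
  "Ptrig N x = ((4::real) ^ (N - 1) / (real N * real ((2*N - 2) choose (N - 1)))) ^ CARD('n)
      * (\<Prod>j\<in>UNIV. sin (pi * x $ j / real N) ^ (2*N - 2))"

definition cubeN :: "nat \<Rightarrow> (real^'n) set" where
  "cubeN N = {x. \<forall>j. 0 \<le> x $ j \<and> x $ j \<le> real N}"

definition latt :: "int^'n \<Rightarrow> real^'n" where
  "latt n = (\<chi> j. real_of_int (n $ j))"

text \<open>C^m(R^d): all partial derivatives of total order at most m exist everywhere
  and are continuous.\<close>
fun Cm :: "nat \<Rightarrow> (real^'n \<Rightarrow> real) \<Rightarrow> bool" where
  "Cm 0 f = continuous_on UNIV f"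
| "Cm (Suc m) f = (continuous_on UNIV f \<and>
      (\<forall>i. \<exists>g. (\<forall>x. ((\<lambda>t. f (x + t *\<^sub>R axis i 1)) has_real_derivative g x) (at 0)) \<and> Cm m g))"

end

theory Submission
  imports Defs
begin


lemma sin_pow_exp:
  fixes \<theta> :: real and m :: nat
  shows "complex_of_real (sin \<theta> ^ (2*m)) =
    (\<Sum>k\<le>2*m. of_nat ((2*m) choose k) * (-1)^(2*m-k) *
        exp (\<i> * of_real ((2*real k - 2*real m) * \<theta>))) / (-4)^m"
proof -
  define E where "E = exp (\<i> * of_real \<theta>)"
  define E' where "E' = exp (-(\<i> * of_real \<theta>))"
  have "complex_of_real (sin \<theta>) = (E + (-E')) / (2*\<i>)"
    unfolding E_def E'_def by (simp add: sin_of_real[symmetric] sin_exp_eq)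
  hence "complex_of_real (sin \<theta> ^ (2*m)) = ((E + (-E')) / (2*\<i>))^(2*m)"
    by (simp only: of_real_power)
  also have "\<dots> = (E + (-E'))^(2*m) / (2*\<i>)^(2*m)"
    by (simp only: power_divide)
  also have "(2*\<i>)^(2*m) = (-4::complex)^m"
    by (simp add: power_mult power_mult_distrib)
  also have "(E + (-E'))^(2*m) = (\<Sum>k\<le>2*m. of_nat ((2*m) choose k) * E^k * (-E')^(2*m-k))"
    by (rule binomial_ring)
  also have "\<dots> = (\<Sum>k\<le>2*m. of_nat ((2*m) choose k) * (-1)^(2*m-k) *
        exp (\<i> * of_real ((2*real k - 2*real m) * \<theta>)))"
  proof (rule sum.cong[OF refl])
    fix k assume k: "k \<in> {..2*m}"
    have "E^k * E'^(2*m-k) = exp (of_nat k * (\<i> * of_real \<theta>)) * exp (of_nat (2*m-k) * (-(\<i> * of_real \<theta>)))"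
      unfolding E_def E'_def exp_of_nat_mult by (rule refl)
    also have "\<dots> = exp (of_nat k * (\<i> * of_real \<theta>) + of_nat (2*m-k) * (-(\<i> * of_real \<theta>)))"
      by (simp only: exp_add)
    also have "of_nat k * (\<i> * of_real \<theta>) + of_nat (2*m-k) * (-(\<i> * of_real \<theta>)) = \<i> * of_real ((2*real k - 2*real m) * \<theta>)"
      using k by (simp add: of_nat_diff algebra_simps)
    finally have "E^k * E'^(2*m-k) = exp (\<i> * of_real ((2*real k - 2*real m) * \<theta>))" .
    thus "of_nat ((2*m) choose k) * E^k * (-E')^(2*m-k) = of_nat ((2*m) choose k) * (-1)^(2*m-k) *
        exp (\<i> * of_real ((2*real k - 2*real m) * \<theta>))"
      by (simp add: power_minus[of E'] mult_ac)
  qed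
  finally show ?thesis .
qed

lemma geom_roots:
  fixes m :: nat and k :: nat and z :: real
  assumes "k \<le> 2*m"
  defines "N \<equiv> Suc m"
  shows "(\<Sum>i<N. exp (\<i> * of_real ((2*real k - 2*real m) * (pi * (z + real i) / real N)))) =
      (if k = m then of_nat N else 0)"
proof -
  define w where "w = 2*real k - 2*real m"
  define \<omega> where "\<omega> = exp (\<i> * of_real (w * pi / real N))"
  define c where "c = exp (\<i> * of_real (w * pi * z / real N))"
  have eq: "exp (\<i> * of_real (w * (pi * (z + real i) / real N))) = c * \<omega>^i" for i
  proof -
    have "\<i> * of_real (w * (pi * (z + real i) / real N)) = \<i> * of_real (w * pi * z / real N) + of_nat i * (\<i> * of_real (w * pi / real N))"
      by (simp add: algebra_simps add_divide_distrib)
    hence "exp (\<i> * of_real (w * (pi * (z + real i) / real N))) = exp (\<i> * of_real (w * pi * z / real N) + of_nat i * (\<i> * of_real (w * pi / real N)))"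
      by (rule arg_cong[where f=exp])
    thus ?thesis unfolding c_def \<omega>_def by (simp only: exp_add exp_of_nat_mult)
  qed
  have "(\<Sum>i<N. exp (\<i> * of_real (w * (pi * (z + real i) / real N)))) = c * (\<Sum>i<N. \<omega>^i)"
    by (simp only: eq sum_distrib_left)
  also have "\<dots> = (if k = m then of_nat N else 0)"
  proof (cases "k = m")
    case True
    then show ?thesis by (simp add: w_def \<omega>_def c_def)
  next
    case False
    have "\<omega>^N = exp (of_nat N * (\<i> * of_real (w * pi / real N)))"
      unfolding \<omega>_def by (simp only: exp_of_nat_mult)
    also have "of_nat N * (\<i> * of_real (w * pi / real N)) = \<i> * of_real (w * pi)"
    proof -
      have "complex_of_nat N \<noteq> 0" unfolding N_def by (rule of_nat_neq_0)
      thus ?thesis by (simp add: field_simps)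
    qed
    also have "exp (\<i> * of_real (w * pi)) = 1"
      unfolding exp_eq_1 by (auto simp: w_def intro!: exI[of _ "int k - int m"])
    finally have wN: "\<omega>^N = 1" .
    have "\<omega> \<noteq> 1"
    proof
      assume "\<omega> = 1"
      then obtain n :: int where n: "w * pi / real N = of_int (2*n) * pi"
        unfolding \<omega>_def exp_eq_1 by auto
      have "real N \<noteq> 0" unfolding N_def by (rule of_nat_neq_0)
      hence "w * pi = of_int (2*n) * real N * pi" using n by (simp add: field_simps)
      hence "w = of_int (2*n) * real N" using pi_neq_zero by simp
      hence "real_of_int (int k - int m) = real_of_int (n * int N)" unfolding w_def by simp
      hence kmn: "int k - int m = n * int N" by (rule of_int_eq_iff[THEN iffD1])
      have lt: "\<bar>int k - int m\<bar> < int N" using assms by (simp add: N_def)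
      have "n = 0"
      proof (rule ccontr)
        assume "n \<noteq> 0"
        hence "1 \<le> \<bar>n\<bar>" by simp
        hence "1 * int N \<le> \<bar>n\<bar> * int N" by (rule mult_right_mono) simp
        also have "\<bar>n\<bar> * int N = \<bar>int k - int m\<bar>" by (simp add: kmn abs_mult)
        finally show False using lt by simp
      qed
      with kmn False show False by simp
    qed
    then show ?thesis using False wN by (simp add: sum_gp_strict)
  qed
  finally show ?thesis unfolding w_def .
qed


lemma trig_sum:
  fixes m :: nat and z :: real
  shows "(\<Sum>i<Suc m. sin (pi * (z + real i) / real (Suc m)) ^ (2*m)) =
           real (Suc m) * real ((2*m) choose m) / 4^m"
proof -
  define N where "N = Suc m"
  have "complex_of_real (\<Sum>i<N. sin (pi * (z + real i) / real N) ^ (2*m)) =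
     (\<Sum>i<N. (\<Sum>k\<le>2*m. of_nat ((2*m) choose k) * (-1)^(2*m-k) *
        exp (\<i> * of_real ((2*real k - 2*real m) * (pi * (z + real i) / real N)))) / (-4)^m)"
    by (simp only: of_real_sum sin_pow_exp)
  also have "\<dots> = (\<Sum>k\<le>2*m. of_nat ((2*m) choose k) * (-1)^(2*m-k) *
        (\<Sum>i<N. exp (\<i> * of_real ((2*real k - 2*real m) * (pi * (z + real i) / real N))))) / (-4)^m"
    by (simp add: sum_divide_distrib sum_distrib_left sum.swap[of _ "{..<N}"])
  also have "\<dots> = (\<Sum>k\<le>2*m. of_nat ((2*m) choose k) * (-1)^(2*m-k) *
        (if k = m then of_nat N else 0)) / (-4)^m"
  proof -
    have "(\<Sum>i<N. exp (\<i> * of_real ((2*real k - 2*real m) * (pi * (z + real i) / real N)))) = (if k = m then of_nat N else 0)"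
      if "k \<in> {..2*m}" for k
      unfolding N_def using that by (intro geom_roots) simp
    thus ?thesis by (intro arg_cong2[where f="(/)"] sum.cong refl) simp
  qed
  also have "\<dots> = of_nat ((2*m) choose m) * (-1)^(2*m-m) * of_nat N / (-4)^m"
    by (simp add: if_distrib sum.delta cong: if_cong)
  also have "\<dots> = complex_of_real (real N * real ((2*m) choose m) / 4^m)"
  proof -
    have "(-4::complex)^m = (-1)^m * 4^m" by (simp add: power_mult_distrib[symmetric])
    thus ?thesis by (simp add: field_simps)
  qed
  finally show ?thesis unfolding N_def of_real_eq_iff .
qed



fun C1 :: "nat \<Rightarrow> (real \<Rightarrow> real) \<Rightarrow> bool" where
  "C1 0 f = continuous_on UNIV f"
| "C1 (Suc m) f = (continuous_on UNIV f \<and> (\<exists>g. (\<forall>t. (f has_real_derivative g t) (at t)) \<and> C1 m g))"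

lemma C1_cont: "C1 m f \<Longrightarrow> continuous_on UNIV f"
  by (cases m) auto

lemma C1_Suc_mono: "C1 (Suc m) f \<Longrightarrow> C1 m f"
proof (induction m arbitrary: f)
  case 0 thus ?case by auto
next
  case (Suc m)
  then obtain g where "continuous_on UNIV f" "\<forall>t. (f has_real_derivative g t) (at t)" "C1 (Suc m) g" by auto
  with Suc.IH[of g] show ?case by auto
qed

inductive_set sm :: "real \<Rightarrow> (real \<Rightarrow> real) set" for a :: real where
  sm_sin: "(\<lambda>t. sin (a*t)) \<in> sm a"
| sm_cos: "(\<lambda>t. cos (a*t)) \<in> sm a"
| sm_const: "(\<lambda>t. c) \<in> sm a"
| sm_add: "f \<in> sm a \<Longrightarrow> g \<in> sm a \<Longrightarrow> (\<lambda>t. f t + g t) \<in> sm a"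
| sm_mult: "f \<in> sm a \<Longrightarrow> g \<in> sm a \<Longrightarrow> (\<lambda>t. f t * g t) \<in> sm a"

lemma sm_deriv: "f \<in> sm a \<Longrightarrow> \<exists>f'\<in>sm a. \<forall>t. (f has_real_derivative f' t) (at t)"
proof (induction rule: sm.induct)
  case sm_sin
  have "(\<lambda>t. a * cos (a*t)) \<in> sm a" by (rule sm_mult[OF sm_const sm_cos])
  moreover have "\<forall>t. ((\<lambda>t. sin (a*t)) has_real_derivative a * cos (a*t)) (at t)"
    by (auto intro!: derivative_eq_intros)
  ultimately show ?case by (intro bexI[where x="\<lambda>t. a * cos (a*t)"]) simp_all
next
  case sm_cos
  have "(\<lambda>t. (-a) * sin (a*t)) \<in> sm a" by (rule sm_mult[OF sm_const sm_sin])
  moreover have "\<forall>t. ((\<lambda>t. cos (a*t)) has_real_derivative (-a) * sin (a*t)) (at t)"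
    by (auto intro!: derivative_eq_intros)
  ultimately show ?case by (intro bexI[where x="\<lambda>t. (-a) * sin (a*t)"]) simp_all
next
  case (sm_const c)
  have "(\<lambda>t. 0) \<in> sm a" by (rule sm.sm_const)
  moreover have "\<forall>t. ((\<lambda>t. c) has_real_derivative 0) (at t)" by auto
  ultimately show ?case by (intro bexI[where x="\<lambda>t. 0"]) simp_all
next
  case (sm_add f g)
  then obtain f' g' where "f' \<in> sm a" "g' \<in> sm a" "\<forall>t. (f has_real_derivative f' t) (at t)"
    "\<forall>t. (g has_real_derivative g' t) (at t)" by blast
  moreover from this have "(\<lambda>t. f' t + g' t) \<in> sm a" by (intro sm.sm_add)
  ultimately show ?case by (intro bexI[where x="\<lambda>t. f' t + g' t"]) (auto intro!: derivative_eq_intros)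
next
  case (sm_mult f g)
  then obtain f' g' where "f' \<in> sm a" "g' \<in> sm a" "\<forall>t. (f has_real_derivative f' t) (at t)"
    "\<forall>t. (g has_real_derivative g' t) (at t)" "f \<in> sm a" "g \<in> sm a" by blast
  moreover from this have "(\<lambda>t. f' t * g t + f t * g' t) \<in> sm a" by (intro sm.sm_add sm.sm_mult)
  ultimately show ?case by (intro bexI[where x="\<lambda>t. f' t * g t + f t * g' t"]) (auto intro!: derivative_eq_intros)
qed

lemma sm_cont: "f \<in> sm a \<Longrightarrow> continuous_on UNIV f"
  using sm_deriv[of f a]
  by (metis DERIV_isCont continuous_at_imp_continuous_on)

lemma deriv_paste:
  assumes "(f has_real_derivative D) (at x within {..x})" "(f has_real_derivative D) (at x within {x..})"
  shows "(f has_real_derivative D) (at x)"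
proof -
  have "((\<lambda>y. (f y - f x) / (y - x)) \<longlongrightarrow> D) (at x within ({..x} \<union> {x..}))"
    using assms unfolding has_field_derivative_iff by (rule Lim_Un)
  moreover have "{..x} \<union> {x..} = (UNIV::real set)" by auto
  ultimately show ?thesis unfolding has_field_derivative_iff by simp
qed

lemma cont_trunc:
  fixes F :: "real \<Rightarrow> real"
  assumes "continuous_on UNIV F" "F 0 = 0" "F L = 0" "0 \<le> L"
  shows "continuous_on UNIV (\<lambda>t. F t * indicator {0..L} t)"
proof -
  let ?G = "\<lambda>t. F t * indicator {0..L} t"
  have 1: "continuous_on {..0} ?G"
    by (rule continuous_on_eq[OF continuous_on_const[of _ 0]]) (use assms in \<open>auto simp: indicator_def\<close>)
  have 2: "continuous_on {0..L} ?G"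
    by (rule continuous_on_eq[OF continuous_on_subset[OF assms(1)]]) (auto simp: indicator_def)
  have 3: "continuous_on {L..} ?G"
    by (rule continuous_on_eq[OF continuous_on_const[of _ 0]]) (use assms in \<open>auto simp: indicator_def\<close>)
  have "continuous_on ({..0} \<union> {0..L} \<union> {L..}) ?G"
    by (intro continuous_on_closed_Un 1 2 3) auto
  moreover have "{..0} \<union> {0..L} \<union> {L..} = (UNIV::real set)" by auto
  ultimately show ?thesis by simp
qed

lemma deriv_trunc:
  fixes F F' :: "real \<Rightarrow> real"
  assumes d: "\<And>t. (F has_real_derivative F' t) (at t)"
    and z: "F 0 = 0" "F L = 0" "F' 0 = 0" "F' L = 0" and L: "0 < L"
  shows "((\<lambda>t. F t * indicator {0..L} t) has_real_derivative (F' t * indicator {0..L} t)) (at t)"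
proof -
  let ?G = "\<lambda>t. F t * indicator {0..L} t"
  consider "t < 0" | "t = 0" | "0 < t \<and> t < L" | "t = L" | "L < t" by linarith
  thus ?thesis
  proof cases
    case 1
    have "((\<lambda>t. 0) has_real_derivative 0) (at t)" by simp
    hence "(?G has_real_derivative 0) (at t)"
      by (rule has_field_derivative_transform_within_open[where S="{..<0}"]) (use 1 in \<open>auto simp: indicator_def\<close>)
    thus ?thesis using 1 by (simp add: indicator_def)
  next
    case 5
    have "((\<lambda>t. 0) has_real_derivative 0) (at t)" by simp
    hence "(?G has_real_derivative 0) (at t)"
      by (rule has_field_derivative_transform_within_open[where S="{L<..}"]) (use 5 in \<open>auto simp: indicator_def\<close>)
    thus ?thesis using 5 L by (simp add: indicator_def)
  next
    case 3
    have "(?G has_real_derivative F' t) (at t)"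
      by (rule has_field_derivative_transform_within_open[OF d, where S="{0<..<L}"]) (use 3 in \<open>auto simp: indicator_def\<close>)
    thus ?thesis using 3 by (simp add: indicator_def)
  next
    case 2
    have a: "(?G has_real_derivative 0) (at 0 within {..0})"
      by (rule has_field_derivative_transform_within[OF DERIV_const[THEN has_field_derivative_at_within] zero_less_one])
         (use z in \<open>auto simp: indicator_def\<close>)
    have b: "(?G has_real_derivative 0) (at 0 within {0..})"
      by (rule has_field_derivative_transform_within[OF d[of 0, unfolded z(3), THEN has_field_derivative_at_within] L])
         (use z in \<open>auto simp: indicator_def dist_real_def\<close>)
    show ?thesis using deriv_paste[OF a b] 2 z by simp
  next
    case 4
    have a: "(?G has_real_derivative 0) (at L within {L..})"
      by (rule has_field_derivative_transform_within[OF DERIV_const[THEN has_field_derivative_at_within] zero_less_one])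
         (use z in \<open>auto simp: indicator_def\<close>)
    have b: "(?G has_real_derivative 0) (at L within {..L})"
      by (rule has_field_derivative_transform_within[OF d[of L, unfolded z(4), THEN has_field_derivative_at_within] L])
         (use z L in \<open>auto simp: indicator_def dist_real_def\<close>)
    show ?thesis using deriv_paste[OF b a] 4 z by simp
  qed
qed


lemma C1_trunc:
  assumes aL: "sin (a*L) = 0" and L: "0 < L"
  shows "g \<in> sm a \<Longrightarrow> k+1 \<le> j \<Longrightarrow> C1 k (\<lambda>t. sin (a*t)^j * g t * indicator {0..L} t)"
proof (induction k arbitrary: j g)
  case 0
  have "continuous_on UNIV (\<lambda>t. sin (a*t)^j * g t)"
    by (intro continuous_on_mult continuous_intros sm_cont[OF 0(1)])
  hence "continuous_on UNIV (\<lambda>t. sin (a*t)^j * g t * indicator {0..L} t)"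
    by (rule cont_trunc) (use 0 aL L in auto)
  thus ?case by simp
next
  case (Suc k)
  obtain j' where j: "j = Suc j'" using Suc.prems(2) by (cases j) auto
  have j': "k + 1 \<le> j'" using Suc.prems(2) j by simp
  obtain g' where g': "g' \<in> sm a" "\<And>t. (g has_real_derivative g' t) (at t)"
    using sm_deriv[OF Suc.prems(1)] by blast
  define g2 where "g2 = (\<lambda>t. real j * a * cos (a*t) * g t + sin (a*t) * g' t)"
  have g2: "g2 \<in> sm a" unfolding g2_def by (intro sm.intros Suc.prems(1) g'(1))
  have cF: "continuous_on UNIV (\<lambda>t. sin (a*t)^j * g t)"
    by (intro continuous_on_mult continuous_intros sm_cont[OF Suc.prems(1)])
  have dF: "((\<lambda>t. sin (a*t)^j * g t) has_real_derivative sin (a*t)^j' * g2 t) (at t)" for t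
  proof -
    have pj: "(x::real) * x^(j' - Suc 0) = x^j'" for x using j' by (cases j') auto
    show ?thesis unfolding j g2_def by (auto intro!: derivative_eq_intros g'(2) simp: algebra_simps pj)
  qed
  have dG: "((\<lambda>t. sin (a*t)^j * g t * indicator {0..L} t) has_real_derivative
      sin (a*t)^j' * g2 t * indicator {0..L} t) (at t)" for t
    by (rule deriv_trunc[OF dF]) (use j j' aL L in auto)
  have "continuous_on UNIV (\<lambda>t. sin (a*t)^j * g t * indicator {0..L} t)"
    by (rule cont_trunc[OF cF]) (use j aL L in auto)
  moreover have "C1 k (\<lambda>t. sin (a*t)^j' * g2 t * indicator {0..L} t)"
    by (rule Suc.IH[OF g2 j'])
  ultimately show ?case using dG
    by (simp only: C1.simps) (intro conjI exI[where x="\<lambda>t. sin (a*t)^j' * g2 t * indicator {0..L} t"]; simp)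
qed



lemma Cm_prod:
  "(\<And>j. C1 m (h j)) \<Longrightarrow> Cm m (\<lambda>x::real^'n. \<Prod>j\<in>UNIV. h j (x $ j))"
proof (induction m arbitrary: h)
  case 0
  have "continuous_on UNIV (\<lambda>x::real^'n. \<Prod>j\<in>UNIV. h j (x $ j))"
  proof -
    have cj: "continuous_on UNIV (h j)" for j using C1_cont[OF 0[of j]] .
    show ?thesis by (intro continuous_on_prod continuous_on_compose2[OF cj] continuous_intros) auto
  qed
  thus ?case by simp
next
  case (Suc m)
  have cont: "continuous_on UNIV (\<lambda>x::real^'n. \<Prod>j\<in>UNIV. h j (x $ j))"
  proof -
    have cj: "continuous_on UNIV (h j)" for j using C1_cont[OF Suc.prems[of j]] .
    show ?thesis by (intro continuous_on_prod continuous_on_compose2[OF cj] continuous_intros) auto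
  qed
  have "\<forall>j. \<exists>g. (\<forall>t. (h j has_real_derivative g t) (at t)) \<and> C1 m g"
    using Suc.prems by simp
  then obtain H where H: "\<And>j t. (h j has_real_derivative H j t) (at t)" "\<And>j. C1 m (H j)"
    by metis
  have part: "\<exists>g. (\<forall>x. ((\<lambda>t. \<Prod>j\<in>UNIV. h j ((x + t *\<^sub>R axis i 1) $ j)) has_real_derivative g x) (at 0))
       \<and> Cm m g" for i
  proof (intro exI conjI allI)
    let ?g = "\<lambda>x::real^'n. \<Prod>j\<in>UNIV. (h(i := H i)) j (x $ j)"
    show "Cm m ?g"
      by (rule Suc.IH) (use H(2) C1_Suc_mono Suc.prems in auto)
    fix x :: "real^'n"
    define C where "C = (\<Prod>j\<in>UNIV-{i}. h j (x $ j))"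
    have eq1: "(\<Prod>j\<in>UNIV. h j ((x + t *\<^sub>R axis i 1) $ j)) = h i (t + x $ i) * C" for t
    proof -
      have "(\<Prod>j\<in>UNIV. h j ((x + t *\<^sub>R axis i 1) $ j)) =
          h i ((x + t *\<^sub>R axis i 1) $ i) * (\<Prod>j\<in>UNIV-{i}. h j ((x + t *\<^sub>R axis i 1) $ j))"
        by (rule prod.remove) simp_all
      also have "(\<Prod>j\<in>UNIV-{i}. h j ((x + t *\<^sub>R axis i 1) $ j)) = C"
        unfolding C_def by (intro prod.cong) (auto simp: axis_def)
      finally show ?thesis by (simp add: axis_def add.commute)
    qed
    have eq2: "?g x = H i (x $ i) * C"
    proof -
      have "?g x = (h(i := H i)) i (x $ i) * (\<Prod>j\<in>UNIV-{i}. (h(i := H i)) j (x $ j))"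
        by (rule prod.remove) simp_all
      also have "(\<Prod>j\<in>UNIV-{i}. (h(i := H i)) j (x $ j)) = C"
        unfolding C_def by (intro prod.cong) auto
      finally show ?thesis by simp
    qed
    have "((\<lambda>t. h i (t + x $ i)) has_real_derivative H i (x $ i)) (at 0)"
      using DERIV_shift[of "h i" "H i (x $ i)" 0 "x $ i"] H(1)[of i "x $ i"] by simp
    hence "((\<lambda>t. h i (t + x $ i) * C) has_real_derivative H i (x $ i) * C) (at 0)"
      by (rule DERIV_cmult_right)
    thus "((\<lambda>t. \<Prod>j\<in>UNIV. h j ((x + t *\<^sub>R axis i 1) $ j)) has_real_derivative ?g x) (at 0)"
      by (simp only: eq1 eq2)
  qed
  show ?case using cont part by simp
qed


definition qf :: "nat \<Rightarrow> real \<Rightarrow> real" where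
  "qf N t = (4::real) ^ (N - 1) / (real N * real ((2*N - 2) choose (N - 1)))
       * sin (pi * t / real N) ^ (2*N - 2) * indicator {0..real N} t"

lemma fn_eq:
  fixes x :: "real^'n"
  shows "Ptrig N x * indicator (cubeN N) x = (\<Prod>j\<in>UNIV. qf N (x $ j))"
proof -
  define c where "c = (4::real) ^ (N - 1) / (real N * real ((2*N - 2) choose (N - 1)))"
  have ind: "indicator (cubeN N) x = (\<Prod>j\<in>UNIV. indicator {0..real N} (x $ j) :: real)"
  proof (cases "x \<in> cubeN N")
    case True thus ?thesis by (simp add: cubeN_def indicator_def)
  next
    case False
    then obtain j where "x $ j \<notin> {0..real N}" by (auto simp: cubeN_def)
    hence "(\<Prod>j\<in>UNIV. indicator {0..real N} (x $ j) :: real) = 0"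
      by (intro prod_zero bexI[where x=j]) auto
    thus ?thesis using False by simp
  qed
  have "(\<Prod>j\<in>UNIV. qf N (x $ j)) =
      (\<Prod>j\<in>(UNIV::'n set). c) * (\<Prod>j\<in>UNIV. sin (pi * x $ j / real N) ^ (2*N - 2)) * (\<Prod>j\<in>UNIV. indicator {0..real N} (x $ j))"
    unfolding qf_def c_def[symmetric] by (simp only: prod.distrib)
  also have "(\<Prod>j\<in>(UNIV::'n set). c) = c ^ CARD('n)" by simp
  finally show ?thesis unfolding Ptrig_def ind c_def by simp
qed

lemma qf_C1:
  assumes "N \<ge> 2"
  shows "C1 (2*N - 3) (qf N)"
proof -
  define c where "c = (4::real) ^ (N - 1) / (real N * real ((2*N - 2) choose (N - 1)))"
  have "C1 (2*N - 3) (\<lambda>t. sin ((pi / real N)*t)^(2*N-2) * (\<lambda>t. c) t * indicator {0..real N} t)"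
    by (rule C1_trunc) (use assms in \<open>auto intro: sm.intros\<close>)
  moreover have "(\<lambda>t. sin ((pi / real N)*t)^(2*N-2) * (\<lambda>t. c) t * indicator {0..real N} t) = qf N"
    by (auto simp: qf_def c_def fun_eq_iff)
  ultimately show ?thesis by simp
qed

lemma qf_sum:
  fixes y :: real and N :: nat
  assumes N: "N \<ge> 2"
  defines "S \<equiv> {k::int. 0 \<le> y + real_of_int k \<and> y + real_of_int k \<le> real N}"
  shows "finite S" "(\<Sum>k\<in>S. qf N (y + real_of_int k)) = 1"
proof -
  obtain m where m: "N = Suc m" using N by (cases N) auto
  define k0 where "k0 = \<lceil>-y\<rceil>"
  define T where "T = {k0..<k0 + int N}"
  have "S \<subseteq> {\<lceil>-y\<rceil>..\<lfloor>real N - y\<rfloor>}"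
    unfolding S_def by (auto simp: ceiling_le_iff le_floor_iff)
  thus fS: "finite S" by (rule finite_subset) simp
  have fT: "finite T" unfolding T_def by simp
  let ?f = "\<lambda>k. qf N (y + real_of_int k)"
  have z: "qf N (y + real_of_int i) = 0" if i: "i \<in> S \<union> T - T" for i
  proof -
    from i have iS: "i \<in> S" by auto
    have "\<not> i < k0" using iS unfolding S_def k0_def by (auto simp: less_ceiling_iff)
    hence "k0 + int N \<le> i" using i unfolding T_def by auto
    moreover have "-y \<le> real_of_int k0" unfolding k0_def by simp
    ultimately have "real N \<le> y + real_of_int i" by linarith
    hence "y + real_of_int i = real N" using iS unfolding S_def by auto
    thus ?thesis using m N by (simp add: qf_def)
  qed
  have "sum ?f S = sum ?f (S \<union> T)"
    by (rule sum.mono_neutral_left) (use fS fT in \<open>auto simp: S_def qf_def indicator_def\<close>)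
  also have "sum ?f (S \<union> T) = sum ?f T"
    by (rule sum.mono_neutral_right) (use fS fT z in auto)
  also have "\<dots> = (\<Sum>i<N. ?f (k0 + int i))"
  proof (rule sum.reindex_bij_betw[symmetric])
    show "bij_betw (\<lambda>i. k0 + int i) {..<N} T"
      unfolding T_def by (rule bij_betwI[where g="\<lambda>k. nat (k - k0)"]) auto
  qed
  also have "\<dots> = (\<Sum>i<N. (4::real) ^ m / (real N * real ((2*m) choose m)) *
        sin (pi * ((y + real_of_int k0) + real i) / real N) ^ (2*m))"
  proof (rule sum.cong[OF refl])
    fix i assume i: "i \<in> {..<N}"
    have "-y \<le> real_of_int k0" "real_of_int k0 < -y + 1" unfolding k0_def by linarith+
    hence "0 \<le> y + real_of_int (k0 + int i) \<and> y + real_of_int (k0 + int i) \<le> real N"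
      using i by auto
    thus "?f (k0 + int i) = (4::real) ^ m / (real N * real ((2*m) choose m)) *
        sin (pi * ((y + real_of_int k0) + real i) / real N) ^ (2*m)"
      using m by (simp add: qf_def add.assoc)
  qed
  also have "\<dots> = (4::real) ^ m / (real N * real ((2*m) choose m)) * (real N * real ((2*m) choose m) / 4^m)"
    unfolding m by (simp only: sum_distrib_left[symmetric] trig_sum)
  also have "\<dots> = 1" using m by simp
  finally show "sum ?f S = 1" .
qed


theorem corollary3p3:
  fixes N :: nat
  assumes "CARD('n::finite) \<ge> 2"
    and "N \<ge> 2"
  shows "(\<forall>x::real^'n.
           ((\<lambda>n::int^'n. Ptrig N (x + latt n) * indicator (cubeN N) (x + latt n)) has_sum 1) UNIV)
         \<and> Cm (2*N - 3) (\<lambda>x::real^'n. Ptrig N x * indicator (cubeN N) x)"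
proof (intro conjI allI)
  show "Cm (2*N - 3) (\<lambda>x::real^'n. Ptrig N x * indicator (cubeN N) x)"
    unfolding fn_eq by (rule Cm_prod) (rule qf_C1[OF assms(2)])
  fix x :: "real^'n"
  define S where "S j = {k::int. 0 \<le> x$j + real_of_int k \<and> x$j + real_of_int k \<le> real N}" for j
  have fS: "finite (S j)" for j unfolding S_def by (rule qf_sum(1)[OF assms(2)])
  have sS: "(\<Sum>k\<in>S j. qf N (x$j + real_of_int k)) = 1" for j unfolding S_def by (rule qf_sum(2)[OF assms(2)])
  let ?F = "\<lambda>p::'n\<Rightarrow>int. \<Prod>j\<in>UNIV. qf N (x$j + real_of_int (p j))"
  have "(?F has_sum 1) UNIV"
  proof (rule has_sum_finite_neutralI[where B="PiE UNIV S"])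
    show "finite (PiE UNIV S)" by (intro finite_PiE fS) simp
    show "PiE UNIV S \<subseteq> UNIV" by simp
    show "?F p = 0" if p: "p \<in> UNIV - PiE UNIV S" for p
    proof -
      from p obtain j where "p j \<notin> S j" by (auto simp: PiE_iff)
      hence "qf N (x$j + real_of_int (p j)) = 0" by (auto simp: S_def qf_def indicator_def)
      thus ?thesis by (intro prod_zero bexI[where x=j]) auto
    qed
    have "(1::real) = (\<Prod>j\<in>UNIV. \<Sum>k\<in>S j. qf N (x$j + real_of_int k))" by (simp add: sS)
    also have "\<dots> = (\<Sum>p\<in>PiE UNIV S. ?F p)" by (rule prod_sum_PiE) (simp_all add: fS)
    finally show "1 = (\<Sum>p\<in>PiE UNIV S. ?F p)" .
  qed
  moreover have bij: "bij_betw vec_nth (UNIV::(int^'n) set) UNIV"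
    by (rule bij_betwI[where g=vec_lambda]) (simp_all add: vec_lambda_inverse)
  ultimately have "((\<lambda>n::int^'n. ?F (vec_nth n)) has_sum 1) UNIV"
    by (subst has_sum_reindex_bij_betw[OF bij])
  moreover have "(\<lambda>n::int^'n. Ptrig N (x + latt n) * indicator (cubeN N) (x + latt n)) = (\<lambda>n. ?F (vec_nth n))"
    by (simp add: fn_eq latt_def)
  ultimately show "((\<lambda>n::int^'n. Ptrig N (x + latt n) * indicator (cubeN N) (x + latt n)) has_sum 1) UNIV"
    by simp
qed

end
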